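(* Let $\mu$ be a probability measure on $\mathbb{R}^p$ with compact support. Let $(X_i)_{i\in\mathbb{N}}$ be a sequence of i.i.d. $\mathbb{R}^p$-valued random variables with common distribution $\mu$, and for $n\ge1$ let $\mu_n=\frac1n\sum_{i=1}^n\delta_{X_i}$ be the empirical measure. Then for every positive integer $d$ such that the moment matrix $\mathbf{M}_d(\mu)$ is invertible, \[\sup_{\mathbf{x}\in\mathbb{R}^p}\left|\Lambda_{\mu_n,d}(\mathbf{x})-\Lambda_{\mu,d}(\mathbf{x})\right|\longrightarrow0\quad\text{almost surely as }n\to\infty.\]
   Context: For a finite Borel measure $\nu$ on $\mathbb{R}^p$ with finite moments and $d\in\mathbb{N}$, the Christoffel function is $\Lambda_{\nu,d}(\xi)=\min\{\int P^2\,d\nu: P\in\mathbb{R}[X]_d,\ P(\xi)=1\}$, where $\mathbb{R}[X]_d$ is the space of real polynomials in $p$ variables of total degree at most $d$; for $\mu_n$ this is $\min\{\frac1n\sum_{i=1}^nP(X_i)^2: P\in\mathbb{R}[X]_d,\ P(\xi)=1\}$. The moment matrix is $\mathbf{M}_d(\nu)=\int\mathbf{v}_d(\mathbf{x})\mathbf{v}_d(\mathbf{x})^Td\nu(\mathbf{x})$ where $\mathbf{v}_d(\mathbf{x})$ is the vector of all monomials $\mathbf{x}^\alpha$ of total degree at most $d$; when it is invertible, $\Lambda_{\nu,d}(\xi)=(\mathbf{v}_d(\xi)^T\mathbf{M}_d(\nu)^{-1}\mathbf{v}_d(\xi))^{-1}$. *)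

theory Defs
  imports "HOL-Probability.Probability"
begin

definition mindices :: "nat \<Rightarrow> ('p::finite \<Rightarrow> nat) set" where
  "mindices d = {\<alpha>. (\<Sum>i\<in>UNIV. \<alpha> i) \<le> d}"

definition monomial_val :: "('p::finite \<Rightarrow> nat) \<Rightarrow> real^'p \<Rightarrow> real" where
  "monomial_val \<alpha> x = (\<Prod>i\<in>UNIV. (x $ i) ^ (\<alpha> i))"

definition polys :: "nat \<Rightarrow> (real^'p::finite \<Rightarrow> real) set" where
  "polys d = {P. \<exists>c. \<forall>x. P x = (\<Sum>\<alpha>\<in>mindices d. c \<alpha> * monomial_val \<alpha> x)}"

definition christoffel :: "(real^'p::finite) measure \<Rightarrow> nat \<Rightarrow> real^'p \<Rightarrow> real" where
  "christoffel \<nu> d \<xi> = Inf {(\<integral>x. (P x)\<^sup>2 \<partial>\<nu>) | P. P \<in> polys d \<and> P \<xi> = 1}"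

definition christoffel_emp :: "(nat \<Rightarrow> real^'p::finite) \<Rightarrow> nat \<Rightarrow> nat \<Rightarrow> real^'p \<Rightarrow> real" where
  "christoffel_emp X n d \<xi> =
     Inf {(1 / real n) * (\<Sum>i=1..n. (P (X i))\<^sup>2) | P. P \<in> polys d \<and> P \<xi> = 1}"

definition moment_matrix :: "(real^'p::finite) measure \<Rightarrow> nat \<Rightarrow> ('p \<Rightarrow> nat) \<Rightarrow> ('p \<Rightarrow> nat) \<Rightarrow> real" where
  "moment_matrix \<nu> d \<alpha> \<beta> = (\<integral>x. monomial_val \<alpha> x * monomial_val \<beta> x \<partial>\<nu>)"

definition invertible_on :: "'i set \<Rightarrow> ('i \<Rightarrow> 'i \<Rightarrow> real) \<Rightarrow> bool" where
  "invertible_on A M \<longleftrightarrow> (\<exists>N. \<forall>a\<in>A. \<forall>b\<in>A.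
      (\<Sum>c\<in>A. M a c * N c b) = (if a = b then 1 else 0) \<and>
      (\<Sum>c\<in>A. N a c * M c b) = (if a = b then 1 else 0))"

end

theory Submission
  imports Defs
begin

definition pv :: "nat \<Rightarrow> (('p::finite \<Rightarrow> nat) \<Rightarrow> real) \<Rightarrow> real^'p \<Rightarrow> real" where
  "pv d c x = (\<Sum>\<alpha>\<in>mindices d. c \<alpha> * monomial_val \<alpha> x)"

lemma finite_mindices: "finite (mindices d :: ('p::finite \<Rightarrow> nat) set)"
proof -
  have "mindices d \<subseteq> (PiE (UNIV::'p set) (\<lambda>_. {..d}))"
  proof
    fix \<alpha> :: "'p \<Rightarrow> nat" assume "\<alpha> \<in> mindices d"
    then have s: "(\<Sum>i\<in>UNIV. \<alpha> i) \<le> d" by (simp add: mindices_def)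
    have "\<alpha> i \<le> d" for i
      using member_le_sum[of i UNIV \<alpha>] s by simp
    then show "\<alpha> \<in> PiE UNIV (\<lambda>_. {..d})" by (auto simp: PiE_def extensional_def)
  qed
  moreover have "finite (PiE (UNIV::'p set) (\<lambda>_. {..d}))"
    by (intro finite_PiE) auto
  ultimately show ?thesis by (rule finite_subset)
qed

lemma zero_mindices: "(\<lambda>_. 0) \<in> mindices d"
  by (simp add: mindices_def)

lemma monomial_zero: "monomial_val (\<lambda>_. 0) x = 1"
  by (simp add: monomial_val_def)

lemma cont_mv [continuous_intros]: "continuous_on S (monomial_val \<alpha>)"
  unfolding monomial_val_def by (intro continuous_intros)

lemma cont_pv [continuous_intros]: "continuous_on S (pv d c)"
  unfolding pv_def by (intro continuous_intros)

lemma discr: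
  fixes a b q :: real
  assumes h: "\<And>t. 0 \<le> a * t\<^sup>2 - 2 * b * t + q" and a: "0 \<le> a"
  shows "b\<^sup>2 \<le> a * q"
proof (cases "a = 0")
  case True
  show ?thesis
  proof (cases "b = 0")
    case False
    have "0 \<le> a * ((q+1)/(2*b))\<^sup>2 - 2 * b * ((q+1)/(2*b)) + q" by (rule h)
    with True False show ?thesis by (simp add: field_simps)
  qed (simp add: True)
next
  case False
  with a have a': "a > 0" by simp
  have "0 \<le> a * (b/a)\<^sup>2 - 2 * b * (b/a) + q" by (rule h)
  also have "a * (b/a)\<^sup>2 - 2 * b * (b/a) + q = q - b\<^sup>2 / a"
    using a' by (simp add: field_simps power2_eq_square)
  finally have "b\<^sup>2 / a \<le> q" by simp
  with a' show ?thesis by (simp add: field_simps mult.commute)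
qed

lemma inf_compare:
  fixes q q' :: "'c \<Rightarrow> real"
  assumes ne: "S \<noteq> {}" and q0: "\<And>c. c \<in> S \<Longrightarrow> 0 \<le> q c" and q'0: "\<And>c. c \<in> S \<Longrightarrow> 0 \<le> q' c"
    and cl: "\<And>c. c \<in> S \<Longrightarrow> \<bar>q' c - q c\<bar> \<le> \<eta> * q c"
    and one: "Inf (q ` S) \<le> 1" and eta: "0 \<le> \<eta>"
  shows "\<bar>Inf (q' ` S) - Inf (q ` S)\<bar> \<le> \<eta>"
proof -
  define I where "I = Inf (q ` S)"
  define I' where "I' = Inf (q' ` S)"
  have bI: "bdd_below (q ` S)" using q0 by (intro bdd_belowI2) auto
  have bI': "bdd_below (q' ` S)" using q'0 by (intro bdd_belowI2) auto
  have I0: "0 \<le> I" unfolding I_def using ne q0 by (intro cInf_greatest) auto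
  have Iq: "I \<le> q c" if "c \<in> S" for c unfolding I_def using that bI by (intro cInf_lower) auto
  have I'q: "I' \<le> q' c" if "c \<in> S" for c unfolding I'_def using that bI' by (intro cInf_lower) auto
  have "I' / (1 + \<eta>) \<le> I" unfolding I_def
  proof (rule cInf_greatest)
    show "q ` S \<noteq> {}" using ne by simp
  next
    fix y assume "y \<in> q ` S"
    then obtain c where c: "c \<in> S" "y = q c" by auto
    have "I' \<le> (1 + \<eta>) * q c" using I'q[OF c(1)] cl[OF c(1)] by (simp add: algebra_simps abs_le_iff)
    then show "I' / (1 + \<eta>) \<le> y" using c eta by (simp add: divide_le_eq mult.commute)
  qed
  then have up: "I' \<le> (1 + \<eta>) * I" using eta by (simp add: divide_le_eq mult.commute)
  have lo: "(1 - \<eta>) * I \<le> I'" unfolding I'_def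
  proof (rule cInf_greatest)
    show "q' ` S \<noteq> {}" using ne by simp
  next
    fix y assume "y \<in> q' ` S"
    then obtain c where c: "c \<in> S" "y = q' c" by auto
    show "(1 - \<eta>) * I \<le> y"
    proof (cases "\<eta> \<le> 1")
      case True
      then have "(1 - \<eta>) * I \<le> (1 - \<eta>) * q c" using Iq[OF c(1)] by (intro mult_left_mono) auto
      also have "\<dots> \<le> q' c" using cl[OF c(1)] by (simp add: algebra_simps abs_le_iff)
      finally show ?thesis using c by simp
    next
      case False
      then have "(1 - \<eta>) * I \<le> 0" using I0 by (simp add: mult_nonpos_nonneg)
      also have "\<dots> \<le> y" using q'0 c by simp
      finally show ?thesis .
    qed
  qed
  have "\<eta> * I \<le> \<eta>" using one eta unfolding I_def by (simp add: mult_left_le)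
  with up lo show ?thesis unfolding I_def[symmetric] I'_def[symmetric] by (simp add: algebra_simps abs_le_iff)
qed

lemma polys_set: "{f P | P. P \<in> polys d \<and> P \<xi> = 1} = (\<lambda>c. f (pv d c)) ` {c. pv d c \<xi> = 1}"
proof -
  have *: "P \<in> polys d \<longleftrightarrow> (\<exists>c. P = pv d c)" for P
    by (auto simp: polys_def pv_def fun_eq_iff)
  show ?thesis unfolding * by auto
qed

lemma christoffel_eq: "christoffel \<nu> d \<xi> = Inf ((\<lambda>c. \<integral>x. (pv d c x)\<^sup>2 \<partial>\<nu>) ` {c. pv d c \<xi> = 1})"
  unfolding christoffel_def using polys_set[of "\<lambda>P. \<integral>x. (P x)\<^sup>2 \<partial>\<nu>" d \<xi>] by simp

lemma christoffel_emp_eq: "christoffel_emp Y n d \<xi> =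
   Inf ((\<lambda>c. (1 / real n) * (\<Sum>i=1..n. (pv d c (Y i))\<^sup>2)) ` {c. pv d c \<xi> = 1})"
  unfolding christoffel_emp_def using polys_set[of "\<lambda>P. (1 / real n) * (\<Sum>i=1..n. (P (Y i))\<^sup>2)" d \<xi>] by simp

lemma pv_one: "pv d (\<lambda>\<alpha>. if \<alpha> = (\<lambda>_. 0) then 1 else 0) x = 1"
proof -
  have "pv d (\<lambda>\<alpha>. if \<alpha> = (\<lambda>_. 0) then 1 else 0) x =
     (\<Sum>\<alpha>\<in>mindices d. if \<alpha> = (\<lambda>_. 0) then monomial_val \<alpha> x else 0)"
    unfolding pv_def by (intro sum.cong) auto
  also have "\<dots> = 1"
    by (subst sum.delta[OF finite_mindices]) (simp add: zero_mindices monomial_zero)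
  finally show ?thesis .
qed

context
  fixes \<mu> :: "(real^'p::finite) measure" and K :: "(real^'p) set" and d :: nat
  assumes ps: "prob_space \<mu>" and sb: "sets \<mu> = sets borel" and cK: "compact K"
    and aeK: "AE x in \<mu>. x \<in> K"
begin

lemma intg: "continuous_on UNIV f \<Longrightarrow> integrable \<mu> (f::real^'p \<Rightarrow> real)"
proof -
  assume c: "continuous_on UNIV f"
  have "compact (f ` K)"
    by (rule compact_continuous_image[OF continuous_on_subset[OF c] cK]) auto
  then obtain B where B: "\<forall>y\<in>f ` K. norm y \<le> B"
    using compact_imp_bounded bounded_iff by metis
  have "AE x in \<mu>. norm (f x) \<le> B"
    using aeK by eventually_elim (use B in auto)
  moreover have "f \<in> borel_measurable \<mu>"
    unfolding measurable_cong_sets[OF sb refl] by (rule borel_measurable_continuous_onI[OF c])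
  ultimately show ?thesis
    using prob_space.finite_measure[OF ps] finite_measure.integrable_const_bound by blast
qed

lemma w_eq: "(\<integral>x. monomial_val \<alpha> x * pv d c x \<partial>\<mu>) =
   (\<Sum>\<beta>\<in>mindices d. moment_matrix \<mu> d \<alpha> \<beta> * c \<beta>)"
proof -
  have "(\<integral>x. monomial_val \<alpha> x * pv d c x \<partial>\<mu>) =
     (\<integral>x. (\<Sum>\<beta>\<in>mindices d. c \<beta> * (monomial_val \<alpha> x * monomial_val \<beta> x)) \<partial>\<mu>)"
    by (simp add: pv_def sum_distrib_left mult_ac)
  also have "\<dots> = (\<Sum>\<beta>\<in>mindices d. (\<integral>x. c \<beta> * (monomial_val \<alpha> x * monomial_val \<beta> x) \<partial>\<mu>))"
    apply (rule Bochner_Integration.integral_sum)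
    apply (rule intg)
    apply (intro continuous_intros)
    done
  also have "\<dots> = (\<Sum>\<beta>\<in>mindices d. moment_matrix \<mu> d \<alpha> \<beta> * c \<beta>)"
    by (simp add: moment_matrix_def mult.commute)
  finally show ?thesis .
qed

lemma sq_expand: "(pv d c y)\<^sup>2 = (\<Sum>\<alpha>\<in>mindices d. \<Sum>\<beta>\<in>mindices d.
     c \<alpha> * c \<beta> * (monomial_val \<alpha> y * monomial_val \<beta> y))"
  unfolding pv_def power2_eq_square sum_product by (simp add: mult_ac)

lemma q_eq: "(\<integral>x. (pv d c x)\<^sup>2 \<partial>\<mu>) =
   (\<Sum>\<alpha>\<in>mindices d. \<Sum>\<beta>\<in>mindices d. c \<alpha> * c \<beta> * moment_matrix \<mu> d \<alpha> \<beta>)"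
proof -
  have "(\<integral>x. (pv d c x)\<^sup>2 \<partial>\<mu>) = (\<integral>x. (\<Sum>\<alpha>\<in>mindices d. \<Sum>\<beta>\<in>mindices d.
     c \<alpha> * c \<beta> * (monomial_val \<alpha> x * monomial_val \<beta> x)) \<partial>\<mu>)"
    by (simp add: sq_expand)
  also have "\<dots> = (\<Sum>\<alpha>\<in>mindices d. (\<integral>x. (\<Sum>\<beta>\<in>mindices d.
     c \<alpha> * c \<beta> * (monomial_val \<alpha> x * monomial_val \<beta> x)) \<partial>\<mu>))"
    by (rule Bochner_Integration.integral_sum, rule intg, intro continuous_intros)
  also have "\<dots> = (\<Sum>\<alpha>\<in>mindices d. \<Sum>\<beta>\<in>mindices d. (\<integral>x. 
     c \<alpha> * c \<beta> * (monomial_val \<alpha> x * monomial_val \<beta> x) \<partial>\<mu>))"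
    by (intro sum.cong refl, rule Bochner_Integration.integral_sum, rule intg, intro continuous_intros)
  also have "\<dots> = (\<Sum>\<alpha>\<in>mindices d. \<Sum>\<beta>\<in>mindices d. c \<alpha> * c \<beta> * moment_matrix \<mu> d \<alpha> \<beta>)"
    by (simp add: moment_matrix_def)
  finally show ?thesis .
qed

lemma cs: "(\<integral>x. monomial_val \<alpha> x * pv d c x \<partial>\<mu>)\<^sup>2 \<le>
   moment_matrix \<mu> d \<alpha> \<alpha> * (\<integral>x. (pv d c x)\<^sup>2 \<partial>\<mu>)"
proof (rule discr)
  fix t :: real
  have "0 \<le> (\<integral>x. (t * monomial_val \<alpha> x - pv d c x)\<^sup>2 \<partial>\<mu>)"
    by (intro integral_nonneg_AE) auto
  also have "(\<integral>x. (t * monomial_val \<alpha> x - pv d c x)\<^sup>2 \<partial>\<mu>) =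
     (\<integral>x. t\<^sup>2 * (monomial_val \<alpha> x * monomial_val \<alpha> x) + (- 2 * t) * (monomial_val \<alpha> x * pv d c x)
        + (pv d c x)\<^sup>2 \<partial>\<mu>)"
    by (intro Bochner_Integration.integral_cong refl) (simp add: power2_eq_square algebra_simps)
  also have "\<dots> = t\<^sup>2 * moment_matrix \<mu> d \<alpha> \<alpha> + (- 2 * t) * (\<integral>x. monomial_val \<alpha> x * pv d c x \<partial>\<mu>)
        + (\<integral>x. (pv d c x)\<^sup>2 \<partial>\<mu>)"
    by (subst Bochner_Integration.integral_add Bochner_Integration.integral_add, (intro intg continuous_intros)+)+
       (simp add: moment_matrix_def)
  finally show "0 \<le> moment_matrix \<mu> d \<alpha> \<alpha> * t\<^sup>2 - 2 * (\<integral>x. monomial_val \<alpha> x * pv d c x \<partial>\<mu>) * t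
        + (\<integral>x. (pv d c x)\<^sup>2 \<partial>\<mu>)" by (simp add: algebra_simps)
next
  show "0 \<le> moment_matrix \<mu> d \<alpha> \<alpha>"
    unfolding moment_matrix_def by (intro integral_nonneg_AE) auto
qed

lemma mdiag: "0 \<le> moment_matrix \<mu> d \<alpha> \<alpha>"
  unfolding moment_matrix_def by (intro integral_nonneg_AE) auto

lemma q_nonneg: "0 \<le> (\<integral>x. (pv d c x)\<^sup>2 \<partial>\<mu>)"
  by (intro integral_nonneg_AE) auto

lemma coef_bound:
  assumes inv: "invertible_on (mindices d) (moment_matrix \<mu> d)"
  shows "\<exists>C>0. \<forall>c. (\<Sum>\<gamma>\<in>mindices d. \<bar>c \<gamma>\<bar>)\<^sup>2 \<le> C * (\<integral>x. (pv d c x)\<^sup>2 \<partial>\<mu>)"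
proof -
  let ?A = "mindices d :: ('p \<Rightarrow> nat) set"
  let ?m = "moment_matrix \<mu> d"
  obtain N where N: "\<And>a b. a \<in> ?A \<Longrightarrow> b \<in> ?A \<Longrightarrow>
      (\<Sum>c\<in>?A. N a c * ?m c b) = (if a = b then 1 else 0)"
    using inv unfolding invertible_on_def by blast
  define K0 where "K0 = (\<Sum>\<gamma>\<in>?A. \<Sum>\<alpha>\<in>?A. \<bar>N \<gamma> \<alpha>\<bar> * sqrt (?m \<alpha> \<alpha>))"
  have K0: "0 \<le> K0" unfolding K0_def by (intro sum_nonneg mult_nonneg_nonneg) (auto simp: mdiag)
  have "\<forall>c. (\<Sum>\<gamma>\<in>?A. \<bar>c \<gamma>\<bar>)\<^sup>2 \<le> (K0\<^sup>2 + 1) * (\<integral>x. (pv d c x)\<^sup>2 \<partial>\<mu>)"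
  proof
    fix c
    define q where "q = (\<integral>x. (pv d c x)\<^sup>2 \<partial>\<mu>)"
    have q: "0 \<le> q" unfolding q_def by (rule q_nonneg)
    define w where "w \<alpha> = (\<Sum>\<beta>\<in>?A. ?m \<alpha> \<beta> * c \<beta>)" for \<alpha>
    have cw: "c \<gamma> = (\<Sum>\<alpha>\<in>?A. N \<gamma> \<alpha> * w \<alpha>)" if g: "\<gamma> \<in> ?A" for \<gamma>
    proof -
      have "(\<Sum>\<alpha>\<in>?A. N \<gamma> \<alpha> * w \<alpha>) = (\<Sum>\<alpha>\<in>?A. \<Sum>\<beta>\<in>?A. N \<gamma> \<alpha> * ?m \<alpha> \<beta> * c \<beta>)"
        by (simp add: w_def sum_distrib_left mult_ac)
      also have "\<dots> = (\<Sum>\<beta>\<in>?A. \<Sum>\<alpha>\<in>?A. N \<gamma> \<alpha> * ?m \<alpha> \<beta> * c \<beta>)"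
        by (rule sum.swap)
      also have "\<dots> = (\<Sum>\<beta>\<in>?A. (\<Sum>\<alpha>\<in>?A. N \<gamma> \<alpha> * ?m \<alpha> \<beta>) * c \<beta>)"
        by (simp add: sum_distrib_right)
      also have "\<dots> = (\<Sum>\<beta>\<in>?A. (if \<gamma> = \<beta> then c \<beta> else 0))"
        by (intro sum.cong refl) (simp add: N g)
      also have "\<dots> = c \<gamma>" by (subst sum.delta'[OF finite_mindices]) (simp add: g)
      finally show ?thesis by simp
    qed
    have wb: "\<bar>w \<alpha>\<bar> \<le> sqrt (?m \<alpha> \<alpha>) * sqrt q" for \<alpha>
    proof -
      have "(w \<alpha>)\<^sup>2 \<le> ?m \<alpha> \<alpha> * q"
        using cs[of \<alpha> c] w_eq[of \<alpha> c] unfolding w_def q_def by simp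
      then have "sqrt ((w \<alpha>)\<^sup>2) \<le> sqrt (?m \<alpha> \<alpha> * q)" by (rule real_sqrt_le_mono)
      then show ?thesis by (simp add: real_sqrt_mult)
    qed
    have cb: "\<bar>c \<gamma>\<bar> \<le> (\<Sum>\<alpha>\<in>?A. \<bar>N \<gamma> \<alpha>\<bar> * sqrt (?m \<alpha> \<alpha>)) * sqrt q" if g: "\<gamma> \<in> ?A" for \<gamma>
    proof -
      have "\<bar>c \<gamma>\<bar> \<le> (\<Sum>\<alpha>\<in>?A. \<bar>N \<gamma> \<alpha> * w \<alpha>\<bar>)"
        unfolding cw[OF g] by (rule sum_abs)
      also have "\<dots> \<le> (\<Sum>\<alpha>\<in>?A. \<bar>N \<gamma> \<alpha>\<bar> * (sqrt (?m \<alpha> \<alpha>) * sqrt q))"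
        by (intro sum_mono) (simp add: abs_mult mult_left_mono wb)
      also have "\<dots> = (\<Sum>\<alpha>\<in>?A. \<bar>N \<gamma> \<alpha>\<bar> * sqrt (?m \<alpha> \<alpha>)) * sqrt q"
        by (simp add: sum_distrib_right mult.assoc)
      finally show ?thesis .
    qed
    have "(\<Sum>\<gamma>\<in>?A. \<bar>c \<gamma>\<bar>) \<le> (\<Sum>\<gamma>\<in>?A. (\<Sum>\<alpha>\<in>?A. \<bar>N \<gamma> \<alpha>\<bar> * sqrt (?m \<alpha> \<alpha>)) * sqrt q)"
      by (intro sum_mono cb)
    also have "\<dots> = K0 * sqrt q" by (simp add: K0_def sum_distrib_right)
    finally have "(\<Sum>\<gamma>\<in>?A. \<bar>c \<gamma>\<bar>) \<le> K0 * sqrt q" .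
    then have "(\<Sum>\<gamma>\<in>?A. \<bar>c \<gamma>\<bar>)\<^sup>2 \<le> (K0 * sqrt q)\<^sup>2"
      by (intro power_mono) (auto intro: sum_nonneg)
    also have "\<dots> = K0\<^sup>2 * q" using q by (simp add: power_mult_distrib)
    also have "\<dots> \<le> (K0\<^sup>2 + 1) * q" using q by (simp add: mult_right_mono)
    finally show "(\<Sum>\<gamma>\<in>?A. \<bar>c \<gamma>\<bar>)\<^sup>2 \<le> (K0\<^sup>2 + 1) * (\<integral>x. (pv d c x)\<^sup>2 \<partial>\<mu>)"
      unfolding q_def .
  qed
  moreover have "(0::real) < K0\<^sup>2 + 1" by (simp add: add_nonneg_pos)
  ultimately show ?thesis by blast
qed

lemma q_one: "(\<integral>x. (pv d (\<lambda>\<alpha>. if \<alpha> = (\<lambda>_. 0) then 1 else 0) x)\<^sup>2 \<partial>\<mu>) = 1"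
proof -
  have "pv d (\<lambda>\<alpha>. if \<alpha> = (\<lambda>_. 0) then 1 else 0) x = 1" for x :: "real^'p"
  proof -
    have "pv d (\<lambda>\<alpha>. if \<alpha> = (\<lambda>_. 0) then 1 else 0) x =
       (\<Sum>\<alpha>\<in>mindices d. if \<alpha> = (\<lambda>_. 0) then monomial_val \<alpha> x else 0)"
      unfolding pv_def by (intro sum.cong) auto
    also have "\<dots> = 1" using finite_mindices[of d] zero_mindices[of d]
      by (subst sum.delta[OF finite_mindices]) (simp add: zero_mindices monomial_zero)
    finally show ?thesis .
  qed
  then show ?thesis using prob_space.prob_space[OF ps] by simp
qed

lemma emp_eq: "(1 / real n) * (\<Sum>i=1..n. (pv d c (Y i))\<^sup>2) =
   (\<Sum>\<alpha>\<in>mindices d. \<Sum>\<beta>\<in>mindices d. c \<alpha> * c \<beta> *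
      ((1 / real n) * (\<Sum>i=1..n. monomial_val \<alpha> (Y i) * monomial_val \<beta> (Y i))))"
proof -
  have "(1 / real n) * (\<Sum>i=1..n. (pv d c (Y i))\<^sup>2) = (1 / real n) * (\<Sum>i=1..n.
     \<Sum>\<alpha>\<in>mindices d. \<Sum>\<beta>\<in>mindices d. c \<alpha> * c \<beta> * (monomial_val \<alpha> (Y i) * monomial_val \<beta> (Y i)))"
    by (simp add: sq_expand)
  also have "(\<Sum>i=1..n. \<Sum>\<alpha>\<in>mindices d. \<Sum>\<beta>\<in>mindices d. c \<alpha> * c \<beta> * (monomial_val \<alpha> (Y i) * monomial_val \<beta> (Y i)))
     = (\<Sum>\<alpha>\<in>mindices d. \<Sum>i=1..n. \<Sum>\<beta>\<in>mindices d. c \<alpha> * c \<beta> * (monomial_val \<alpha> (Y i) * monomial_val \<beta> (Y i)))"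
    by (rule sum.swap)
  also have "\<dots> = (\<Sum>\<alpha>\<in>mindices d. \<Sum>\<beta>\<in>mindices d. \<Sum>i=1..n. c \<alpha> * c \<beta> * (monomial_val \<alpha> (Y i) * monomial_val \<beta> (Y i)))"
    by (intro sum.cong refl sum.swap)
  also have "(1 / real n) * \<dots> = (\<Sum>\<alpha>\<in>mindices d. \<Sum>\<beta>\<in>mindices d. c \<alpha> * c \<beta> *
      ((1 / real n) * (\<Sum>i=1..n. monomial_val \<alpha> (Y i) * monomial_val \<beta> (Y i))))"
    by (simp add: sum_distrib_left mult_ac)
  finally show ?thesis .
qed

lemma step_bound:
  assumes C: "\<And>c. (\<Sum>\<gamma>\<in>mindices d. \<bar>c \<gamma>\<bar>)\<^sup>2 \<le> C * (\<integral>x. (pv d c x)\<^sup>2 \<partial>\<mu>)" and Cp: "0 < C"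
    and dl: "\<And>\<alpha> \<beta>. \<alpha> \<in> mindices d \<Longrightarrow> \<beta> \<in> mindices d \<Longrightarrow>
      \<bar>(1 / real n) * (\<Sum>i=1..n. monomial_val \<alpha> (Y i) * monomial_val \<beta> (Y i)) - moment_matrix \<mu> d \<alpha> \<beta>\<bar> \<le> \<delta>"
    and d0: "0 \<le> \<delta>"
  shows "\<bar>christoffel_emp Y n d \<xi> - christoffel \<mu> d \<xi>\<bar> \<le> \<delta> * C"
proof -
  let ?A = "mindices d :: ('p \<Rightarrow> nat) set"
  define mn where "mn \<alpha> \<beta> = (1 / real n) * (\<Sum>i=1..n. monomial_val \<alpha> (Y i) * monomial_val \<beta> (Y i))" for \<alpha> \<beta>
  let ?c0 = "\<lambda>\<alpha>::'p \<Rightarrow> nat. if \<alpha> = (\<lambda>_. 0) then 1 else (0::real)"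
  show ?thesis unfolding christoffel_eq christoffel_emp_eq
  proof (rule inf_compare)
    show "{c. pv d c \<xi> = 1} \<noteq> {}" using pv_one[of d \<xi>] by blast
  next
    fix c show "0 \<le> (\<integral>x. (pv d c x)\<^sup>2 \<partial>\<mu>)" by (rule q_nonneg)
  next
    fix c show "0 \<le> (1 / real n) * (\<Sum>i=1..n. (pv d c (Y i))\<^sup>2)"
      by (intro mult_nonneg_nonneg sum_nonneg) auto
  next
    show "0 \<le> \<delta> * C" using d0 Cp by simp
  next
    have "(\<integral>x. (pv d ?c0 x)\<^sup>2 \<partial>\<mu>) \<in> (\<lambda>c. \<integral>x. (pv d c x)\<^sup>2 \<partial>\<mu>) ` {c. pv d c \<xi> = 1}"
      using pv_one[of d \<xi>] by blast
    moreover have "bdd_below ((\<lambda>c. \<integral>x. (pv d c x)\<^sup>2 \<partial>\<mu>) ` {c. pv d c \<xi> = 1})"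
      by (intro bdd_belowI2[where m=0] q_nonneg)
    ultimately show "Inf ((\<lambda>c. \<integral>x. (pv d c x)\<^sup>2 \<partial>\<mu>) ` {c. pv d c \<xi> = 1}) \<le> 1"
      using cInf_lower q_one by metis
  next
    fix c
    have "\<bar>(1 / real n) * (\<Sum>i=1..n. (pv d c (Y i))\<^sup>2) - (\<integral>x. (pv d c x)\<^sup>2 \<partial>\<mu>)\<bar>
       = \<bar>\<Sum>\<alpha>\<in>?A. \<Sum>\<beta>\<in>?A. c \<alpha> * c \<beta> * (mn \<alpha> \<beta> - moment_matrix \<mu> d \<alpha> \<beta>)\<bar>"
      unfolding emp_eq q_eq mn_def by (simp add: sum_subtractf algebra_simps)
    also have "\<dots> \<le> (\<Sum>\<alpha>\<in>?A. \<bar>\<Sum>\<beta>\<in>?A. c \<alpha> * c \<beta> * (mn \<alpha> \<beta> - moment_matrix \<mu> d \<alpha> \<beta>)\<bar>)"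
      by (rule sum_abs)
    also have "\<dots> \<le> (\<Sum>\<alpha>\<in>?A. \<Sum>\<beta>\<in>?A. \<bar>c \<alpha> * c \<beta> * (mn \<alpha> \<beta> - moment_matrix \<mu> d \<alpha> \<beta>)\<bar>)"
      by (intro sum_mono sum_abs)
    also have "\<dots> \<le> (\<Sum>\<alpha>\<in>?A. \<Sum>\<beta>\<in>?A. \<bar>c \<alpha>\<bar> * \<bar>c \<beta>\<bar> * \<delta>)"
    proof (intro sum_mono)
      fix \<alpha> \<beta> assume a: "\<alpha> \<in> ?A" and b: "\<beta> \<in> ?A"
      have "\<bar>mn \<alpha> \<beta> - moment_matrix \<mu> d \<alpha> \<beta>\<bar> \<le> \<delta>" unfolding mn_def by (rule dl[OF a b])
      then show "\<bar>c \<alpha> * c \<beta> * (mn \<alpha> \<beta> - moment_matrix \<mu> d \<alpha> \<beta>)\<bar> \<le> \<bar>c \<alpha>\<bar> * \<bar>c \<beta>\<bar> * \<delta>"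
        unfolding abs_mult by (intro mult_left_mono) auto
    qed
    also have "\<dots> = \<delta> * (\<Sum>\<gamma>\<in>?A. \<bar>c \<gamma>\<bar>)\<^sup>2"
      by (simp add: power2_eq_square sum_product sum_distrib_left mult_ac)
    also have "\<dots> \<le> \<delta> * (C * (\<integral>x. (pv d c x)\<^sup>2 \<partial>\<mu>))"
      using C d0 by (intro mult_left_mono) auto
    finally show "\<bar>(1 / real n) * (\<Sum>i=1..n. (pv d c (Y i))\<^sup>2) - (\<integral>x. (pv d c x)\<^sup>2 \<partial>\<mu>)\<bar>
       \<le> \<delta> * C * (\<integral>x. (pv d c x)\<^sup>2 \<partial>\<mu>)" by (simp add: mult.assoc)
  qed
qed

lemma det_conv:
  assumes inv: "invertible_on (mindices d) (moment_matrix \<mu> d)"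
    and conv: "\<And>\<alpha> \<beta>. \<alpha> \<in> mindices d \<Longrightarrow> \<beta> \<in> mindices d \<Longrightarrow>
      (\<lambda>n. (1 / real n) * (\<Sum>i=1..n. monomial_val \<alpha> (Y i) * monomial_val \<beta> (Y i)))
        \<longlonglongrightarrow> moment_matrix \<mu> d \<alpha> \<beta>"
  shows "(\<lambda>n. SUP x. \<bar>christoffel_emp Y n d x - christoffel \<mu> d x\<bar>) \<longlonglongrightarrow> 0"
proof -
  obtain C where Cp: "0 < C" and C: "\<And>c. (\<Sum>\<gamma>\<in>mindices d. \<bar>c \<gamma>\<bar>)\<^sup>2 \<le> C * (\<integral>x. (pv d c x)\<^sup>2 \<partial>\<mu>)"
    using coef_bound[OF inv] by blast
  show ?thesis
  proof (rule LIMSEQ_I)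
    fix e :: real assume e: "0 < e"
    define \<delta> where "\<delta> = e / (2 * C)"
    have dp: "0 < \<delta>" using e Cp by (simp add: \<delta>_def)
    have "\<forall>\<alpha>\<in>mindices d. \<forall>\<beta>\<in>mindices d. eventually (\<lambda>n.
       dist ((1 / real n) * (\<Sum>i=1..n. monomial_val \<alpha> (Y i) * monomial_val \<beta> (Y i))) (moment_matrix \<mu> d \<alpha> \<beta>) < \<delta>) sequentially"
      using conv dp by (auto intro: tendstoD)
    then have "eventually (\<lambda>n. \<forall>\<alpha>\<in>mindices d. \<forall>\<beta>\<in>mindices d.
       dist ((1 / real n) * (\<Sum>i=1..n. monomial_val \<alpha> (Y i) * monomial_val \<beta> (Y i))) (moment_matrix \<mu> d \<alpha> \<beta>) < \<delta>) sequentially"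
      by (simp add: eventually_ball_finite_distrib finite_mindices)
    then obtain no where no: "\<And>n. n \<ge> no \<Longrightarrow> \<forall>\<alpha>\<in>mindices d. \<forall>\<beta>\<in>mindices d.
       dist ((1 / real n) * (\<Sum>i=1..n. monomial_val \<alpha> (Y i) * monomial_val \<beta> (Y i))) (moment_matrix \<mu> d \<alpha> \<beta>) < \<delta>"
      unfolding eventually_sequentially by blast
    show "\<exists>no. \<forall>n\<ge>no. norm ((SUP x. \<bar>christoffel_emp Y n d x - christoffel \<mu> d x\<bar>) - 0) < e"
    proof (intro exI allI impI)
      fix n assume n: "n \<ge> no"
      have b: "\<bar>christoffel_emp Y n d x - christoffel \<mu> d x\<bar> \<le> \<delta> * C" for x
      proof (rule step_bound[OF C Cp])
        fix \<alpha> \<beta> :: "'p \<Rightarrow> nat" assume a: "\<alpha> \<in> mindices d" and b: "\<beta> \<in> mindices d"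
        have "dist ((1 / real n) * (\<Sum>i=1..n. monomial_val \<alpha> (Y i) * monomial_val \<beta> (Y i))) (moment_matrix \<mu> d \<alpha> \<beta>) < \<delta>"
          using no[OF n] a b by blast
        then show "\<bar>(1 / real n) * (\<Sum>i=1..n. monomial_val \<alpha> (Y i) * monomial_val \<beta> (Y i)) - moment_matrix \<mu> d \<alpha> \<beta>\<bar> \<le> \<delta>"
          unfolding dist_real_def by (rule less_imp_le)
      qed (use dp in simp)
      have "(SUP x. \<bar>christoffel_emp Y n d x - christoffel \<mu> d x\<bar>) \<le> \<delta> * C"
        by (rule cSUP_least) (use b in auto)
      moreover have "0 \<le> (SUP x. \<bar>christoffel_emp Y n d x - christoffel \<mu> d x\<bar>)"
        by (rule cSUP_upper2[where x=undefined]) (use b in \<open>auto intro!: bdd_aboveI2\<close>)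
      moreover have "\<delta> * C < e" using e Cp by (simp add: \<delta>_def)
      ultimately show "norm ((SUP x. \<bar>christoffel_emp Y n d x - christoffel \<mu> d x\<bar>) - 0) < e"
        by simp
    qed
  qed
qed

end

lemma aux_alg:
  fixes n D e :: real
  assumes "n \<noteq> 0" "D \<noteq> 0"
  shows "-2 * (n * e)\<^sup>2 / (n * D) = n * (- (2 * e\<^sup>2 / D))"
  using assms by (simp add: power2_eq_square field_simps)

lemma (in prob_space) slln_bounded:
  fixes Z :: "nat \<Rightarrow> 'a \<Rightarrow> real"
  assumes indep: "indep_vars (\<lambda>_. borel) Z UNIV"
    and dis: "\<And>i. distr M borel (Z i) = distr M borel (Z 0)"
    and bnd: "\<And>i x. Z i x \<in> {a..b}" and ab: "a < b"
  shows "AE x in M. (\<lambda>n. (1 / real n) * (\<Sum>i=1..n. Z i x)) \<longlonglongrightarrow> expectation (Z 0)"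
proof -
  have rv[measurable]: "\<And>i. Z i \<in> borel_measurable M" using indep unfolding indep_vars_def by blast
  define \<mu>0 where "\<mu>0 = expectation (Z 0)"
  have key: "AE x in M. eventually (\<lambda>n. \<bar>(1 / real n) * (\<Sum>i=1..n. Z i x) - \<mu>0\<bar> < e) sequentially"
    if e: "e > 0" for e
  proof -
    define r where "r = 2 * e\<^sup>2 / (b - a)\<^sup>2"
    have r: "r > 0" using e ab by (simp add: r_def)
    define A where "A n = {x \<in> space M. real n * e \<le> \<bar>(\<Sum>i\<in>{1..n}. Z i x) - real n * \<mu>0\<bar>}" for n
    have Am[measurable]: "A n \<in> events" for n unfolding A_def by measurable
    have Ab: "prob (A n) \<le> 2 * exp (-r) ^ n" for n
    proof (cases "n = 0")
      case True
      have "2 * exp (-r) ^ n = 2" using True by simp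
      then show ?thesis using prob_le_1[of "A n"] by linarith
    next
      case False
      interpret H: Hoeffding_ineq_iid M "{1..n}" Z "Z 0" a b \<mu>0
      proof unfold_locales
        show "indep_vars (\<lambda>_. borel) Z {1..n}" by (rule indep_vars_subset[OF indep]) auto
        show "AE x in M. Z 0 x \<in> {a..b}" using bnd by simp
      qed (auto simp: \<mu>0_def intro: dis)
      have "prob (A n) \<le> 2 * exp (-2 * (real n * e)\<^sup>2 / (real (card {1..n}) * (b - a)\<^sup>2))"
        unfolding A_def using H.Hoeffding_ineq_abs_ge[of "real n * e"] e ab False by simp
      also have "-2 * (real n * e)\<^sup>2 / (real (card {1..n}) * (b - a)\<^sup>2) = real n * (- r)"
        using aux_alg[of "real n" "(b - a)\<^sup>2" e] False ab by (simp add: r_def)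
      also have "exp (real n * (- r)) = exp (-r) ^ n" by (rule exp_of_nat_mult)
      finally show ?thesis .
    qed
    have sg: "summable (\<lambda>n. 2 * exp (-r) ^ n)"
      using r by (intro summable_mult summable_geometric) simp
    have sm: "summable (\<lambda>n. prob (A n))"
      by (rule summable_comparison_test[OF _ sg]) (use Ab in auto)
    have "AE x in M. eventually (\<lambda>n. x \<in> space M - A n) sequentially"
      by (rule borel_cantelli_AE1) (auto simp: sm emeasure_eq_measure)
    then show ?thesis
    proof (rule eventually_mono)
      fix x assume ev: "eventually (\<lambda>n. x \<in> space M - A n) sequentially"
      show "eventually (\<lambda>n. \<bar>(1 / real n) * (\<Sum>i=1..n. Z i x) - \<mu>0\<bar> < e) sequentially"
        using ev eventually_gt_at_top[of "0::nat"]
      proof eventually_elim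
        case (elim n)
        then have "\<bar>(\<Sum>i\<in>{1..n}. Z i x) - real n * \<mu>0\<bar> < real n * e" by (auto simp: A_def)
        moreover have "(1 / real n) * (\<Sum>i=1..n. Z i x) - \<mu>0 = ((\<Sum>i\<in>{1..n}. Z i x) - real n * \<mu>0) / real n"
          using elim by (simp add: field_simps)
        ultimately show ?case using elim by (simp add: divide_less_eq abs_divide mult.commute)
      qed
    qed
  qed
  have "AE x in M. \<forall>k::nat. eventually (\<lambda>n. \<bar>(1 / real n) * (\<Sum>i=1..n. Z i x) - \<mu>0\<bar> < inverse (real (Suc k))) sequentially"
    unfolding AE_all_countable by (intro allI key) simp
  then show ?thesis
  proof (rule eventually_mono)
    fix x assume H: "\<forall>k::nat. eventually (\<lambda>n. \<bar>(1 / real n) * (\<Sum>i=1..n. Z i x) - \<mu>0\<bar> < inverse (real (Suc k))) sequentially"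
    show "(\<lambda>n. (1 / real n) * (\<Sum>i=1..n. Z i x)) \<longlonglongrightarrow> expectation (Z 0)"
      unfolding \<mu>0_def[symmetric]
    proof (rule LIMSEQ_I)
      fix r :: real assume r: "0 < r"
      obtain k where k: "k > 0" "inverse (real k) < r" using ex_inverse_of_nat_less[OF r] by auto
      then have "inverse (real (Suc (k - 1))) < r" by simp
      with H[rule_format, of "k - 1"] have "eventually (\<lambda>n. \<bar>(1 / real n) * (\<Sum>i=1..n. Z i x) - \<mu>0\<bar> < r) sequentially"
        by (auto elim: eventually_mono)
      then show "\<exists>no. \<forall>n\<ge>no. norm ((1 / real n) * (\<Sum>i=1..n. Z i x) - \<mu>0) < r"
        unfolding eventually_sequentially by simp
    qed
  qed
qed

theorem theorem3p12:
  fixes M :: "'\<omega> measure" and \<mu> :: "(real^'p::finite) measure"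
    and X :: "nat \<Rightarrow> '\<omega> \<Rightarrow> real^'p" and d :: nat
  assumes "prob_space M"
    and "prob_space \<mu>" and "sets \<mu> = sets borel"
    and "\<exists>K. compact K \<and> measure \<mu> K = 1"
    and "\<And>i. X i \<in> borel_measurable M"
    and "prob_space.indep_vars M (\<lambda>_. borel) X UNIV"
    and "\<And>i. distr M borel (X i) = \<mu>"
    and "d \<ge> 1"
    and "invertible_on (mindices d) (moment_matrix \<mu> d)"
  shows "AE \<omega> in M. (\<lambda>n. SUP x. \<bar>christoffel_emp (\<lambda>i. X i \<omega>) n d x - christoffel \<mu> d x\<bar>)
           \<longlonglongrightarrow> 0"
proof -
  note ps = assms(2) and sb = assms(3) and Xm[measurable] = assms(5) and indep = assms(6)
    and dX = assms(7) and inv = assms(9)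
  interpret M: prob_space M by (rule assms(1))
  obtain K where cK: "compact K" and mK: "measure \<mu> K = 1" using assms(4) by blast
  have aeK: "AE x in \<mu>. x \<in> K" by (rule prob_space.AE_prob_1[OF ps mK])
  have Kb[measurable]: "K \<in> sets borel" using cK by (simp add: compact_imp_closed borel_closed)
  have XK: "AE \<omega> in M. \<forall>i. X i \<omega> \<in> K"
    unfolding AE_all_countable
  proof
    fix i
    have "AE x in distr M borel (X i). x \<in> K" unfolding dX by (rule aeK)
    then show "AE \<omega> in M. X i \<omega> \<in> K" by (subst (asm) AE_distr_iff) auto
  qed
  have conv: "AE \<omega> in M. (\<lambda>n. (1 / real n) * (\<Sum>i=1..n. monomial_val \<alpha> (X i \<omega>) * monomial_val \<beta> (X i \<omega>)))
        \<longlonglongrightarrow> moment_matrix \<mu> d \<alpha> \<beta>" for \<alpha> \<beta>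
  proof -
    define f where "f x = monomial_val \<alpha> x * monomial_val \<beta> x" for x :: "real^'p"
    have fc: "continuous_on UNIV f" unfolding f_def by (intro continuous_intros)
    have "compact (f ` K)"
      by (rule compact_continuous_image[OF continuous_on_subset[OF fc] cK]) auto
    then obtain B where B: "\<forall>y\<in>f ` K. norm y \<le> B"
      using compact_imp_bounded bounded_iff by metis
    define g where "g x = (if x \<in> K then f x else 0)" for x
    have gm[measurable]: "g \<in> borel_measurable borel"
      unfolding g_def by (rule borel_measurable_continuous_on_if[OF Kb])
        (auto intro: continuous_on_subset[OF fc] continuous_intros)
    define Z where "Z i \<omega> = g (X i \<omega>)" for i \<omega>
    have gb: "g x \<in> {-\<bar>B\<bar>-1 .. \<bar>B\<bar>+1}" for x
      using B by (auto simp: g_def abs_le_iff)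
    have dZ: "distr M borel (Z i) = distr \<mu> borel g" for i
    proof -
      have "distr M borel (Z i) = distr M borel (g \<circ> X i)" by (simp add: Z_def[abs_def] comp_def)
      also have "\<dots> = distr (distr M borel (X i)) borel g" by (rule distr_distr[symmetric]) auto
      finally show ?thesis using dX by simp
    qed
    have Zi: "M.indep_vars (\<lambda>_. borel) Z UNIV"
      unfolding Z_def by (rule M.indep_vars_compose2[OF indep]) simp
    have sl: "AE \<omega> in M. (\<lambda>n. (1 / real n) * (\<Sum>i=1..n. Z i \<omega>)) \<longlonglongrightarrow> M.expectation (Z 0)"
    proof (rule M.slln_bounded[OF Zi, where a="-\<bar>B\<bar>-1" and b="\<bar>B\<bar>+1"])
      show "distr M borel (Z i) = distr M borel (Z 0)" for i by (simp only: dZ)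
      show "Z i x \<in> {-\<bar>B\<bar>-1 .. \<bar>B\<bar>+1}" for i x unfolding Z_def by (rule gb)
    qed simp
    have "M.expectation (Z 0) = integral\<^sup>L (distr M borel (X 0)) g"
      unfolding Z_def by (rule integral_distr[symmetric]) auto
    also have "\<dots> = integral\<^sup>L \<mu> g" using dX by simp
    also have "\<dots> = integral\<^sup>L \<mu> f"
    proof (rule integral_cong_AE)
      show "g \<in> borel_measurable \<mu>" unfolding measurable_cong_sets[OF sb refl] by (rule gm)
      show "f \<in> borel_measurable \<mu>" unfolding measurable_cong_sets[OF sb refl]
        by (rule borel_measurable_continuous_onI[OF fc])
      show "AE x in \<mu>. g x = f x" using aeK by eventually_elim (simp add: g_def)
    qed
    also have "\<dots> = moment_matrix \<mu> d \<alpha> \<beta>" by (simp add: moment_matrix_def f_def[abs_def])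
    finally have ez: "M.expectation (Z 0) = moment_matrix \<mu> d \<alpha> \<beta>" .
    show ?thesis using sl XK
    proof eventually_elim
      case (elim \<omega>)
      have "Z i \<omega> = monomial_val \<alpha> (X i \<omega>) * monomial_val \<beta> (X i \<omega>)" for i
        using elim(2) unfolding Z_def g_def f_def by simp
      then have "(\<lambda>n. (1 / real n) * (\<Sum>i=1..n. Z i \<omega>)) =
          (\<lambda>n. (1 / real n) * (\<Sum>i=1..n. monomial_val \<alpha> (X i \<omega>) * monomial_val \<beta> (X i \<omega>)))"
        by presburger
      then show ?case using elim(1) unfolding ez by metis
    qed
  qed
  have "AE \<omega> in M. \<forall>\<alpha>\<in>mindices d. \<forall>\<beta>\<in>mindices d.
      (\<lambda>n. (1 / real n) * (\<Sum>i=1..n. monomial_val \<alpha> (X i \<omega>) * monomial_val \<beta> (X i \<omega>)))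
        \<longlonglongrightarrow> moment_matrix \<mu> d \<alpha> \<beta>"
    unfolding AE_finite_all[OF finite_mindices] using conv by blast
  then show ?thesis
  proof (rule eventually_mono)
    fix \<omega> assume H: "\<forall>\<alpha>\<in>mindices d. \<forall>\<beta>\<in>mindices d.
      (\<lambda>n. (1 / real n) * (\<Sum>i=1..n. monomial_val \<alpha> (X i \<omega>) * monomial_val \<beta> (X i \<omega>)))
        \<longlonglongrightarrow> moment_matrix \<mu> d \<alpha> \<beta>"
    show "(\<lambda>n. SUP x. \<bar>christoffel_emp (\<lambda>i. X i \<omega>) n d x - christoffel \<mu> d x\<bar>) \<longlonglongrightarrow> 0"
      by (rule det_conv[OF ps sb cK aeK inv]) (use H in auto)
  qed
qed

end
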